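(* Let $\mathcal G$ be a directed graph with no self loops, with $n$ vertices and edge set $\mathcal E=\{1,\dots,m\}$, and let $B=S-D$ be its incidence matrix. Let $g\in\mathcal E$ and $x\in\mathbb{R}^m$, and let \[ z=(I+B^\mathsf{T}DE^g)\,x. \] Then $z_g=0$. Moreover, for every edge $l\in\mathcal E$ with $\mathrm{src}(l)\neq\mathrm{dst}(g)$ and $\mathrm{dst}(l)\neq\mathrm{dst}(g)$, we have $z_l=x_l$.
   Context: $S,D\in\mathbb{R}^{n\times m}$ are defined by $S_{ie}=1$ if node $i$ is the source of edge $e$ (else $0$), and $D_{ie}=1$ if node $i$ is the destination of edge $e$ (else $0$). $\mathrm{src}(e)$ and $\mathrm{dst}(e)$ denote the source and destination of edge $e$. $E^g\in\mathbb{R}^{m\times m}$ is the matrix with all entries zero except $E^g_{gg}=1$. *)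

theory Defs
  imports "HOL-Analysis.Analysis"
begin

text \<open>Vertices are indexed by a finite type 'n (n = CARD('n)), edges by a finite
type 'm (m = CARD('m)). An edge e goes from src e to dst e.\<close>

definition src_mat :: "('m \<Rightarrow> 'n) \<Rightarrow> real ^ 'm ^ 'n" where
  "src_mat src = (\<chi> i e. if src e = i then 1 else 0)"

definition dst_mat :: "('m \<Rightarrow> 'n) \<Rightarrow> real ^ 'm ^ 'n" where
  "dst_mat dst = (\<chi> i e. if dst e = i then 1 else 0)"

definition incidence_mat :: "('m \<Rightarrow> 'n) \<Rightarrow> ('m \<Rightarrow> 'n) \<Rightarrow> real ^ 'm ^ 'n" where
  "incidence_mat src dst = src_mat src - dst_mat dst"

definition E_mat :: "'m \<Rightarrow> real ^ 'm ^ 'm" where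
  "E_mat g = (\<chi> i j. if i = g \<and> j = g then 1 else 0)"

end

theory Submission
  imports Defs
begin

lemma key:
  fixes src dst :: "'m::finite \<Rightarrow> 'n::finite" and g l :: 'm and x :: "real ^ 'm"
  shows "((mat 1 + transpose (incidence_mat src dst) ** dst_mat dst ** E_mat g) *v x) $ l
    = x $ l + ((if src l = dst g then 1 else 0) - (if dst l = dst g then 1 else 0)) * x $ g"
proof -
  have TD: "(transpose (incidence_mat src dst) ** dst_mat dst) $ l $ g
      = (if src l = dst g then 1 else 0) - (if dst l = dst g then 1 else 0)"
    by (simp add: matrix_matrix_mult_def transpose_def incidence_mat_def src_mat_def dst_mat_def
        left_diff_distrib sum_subtractf if_distrib[of "\<lambda>t. t * _"] sum.delta' cong: if_cong)
  have E: "\<And>k. (transpose (incidence_mat src dst) ** dst_mat dst ** E_mat g) $ l $ k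
      = (if k = g then (transpose (incidence_mat src dst) ** dst_mat dst) $ l $ g else 0)"
    by (simp add: matrix_matrix_mult_def E_mat_def if_distrib[of "\<lambda>t. _ * t"] sum.delta' cong: if_cong)
  show ?thesis
    by (simp add: matrix_vector_mult_def E TD mat_def if_distrib[of "\<lambda>t. t * _"] sum.delta'
        distrib_right sum.distrib cong: if_cong)
qed

theorem lemma3:
  fixes src dst :: "'m::finite \<Rightarrow> 'n::finite"
    and g :: 'm and x z :: "real ^ 'm"
  assumes no_loops: "\<And>e. src e \<noteq> dst e"
    and z_def: "z = (mat 1 + transpose (incidence_mat src dst) ** dst_mat dst ** E_mat g) *v x"
  shows "z $ g = 0 \<and>
         (\<forall>l. src l \<noteq> dst g \<and> dst l \<noteq> dst g \<longrightarrow> z $ l = x $ l)"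
  using no_loops[of g] by (simp add: z_def key)

end
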